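(* Let $S$ be a numerical semigroup with minimal generators $e<a_1<\dots<a_t$, and let $s\in S$ and $r\in\mathbb N$. (1) If $\mathbf x=(x_0,\dots,x_t)$ is an $S$-factorization of $s$ of length $r$, then $(0,x_1,\dots,x_t)$ is a $B^{\mathcal D}$-factorization of $s-re$ of length at most $r$. (2) If $\mathbf y=(y_0,\dots,y_t)$ is a $B^{\mathcal D}$-factorization of $s-re$ of length at most $r$, then $(2y_0+r-|\mathbf y|,y_1,\dots,y_t)$ is an $S$-factorization of $s$ of length $r+y_0$; in particular ${\rm ord}(s;S)\ge r$.
   Context: A numerical semigroup is a submonoid of $(\mathbb N,+)$ with finite complement. An $S$-factorization of $n\in S$ is $(c_0,\dots,c_t)\in\mathbb N^{t+1}$ with $c_0e+\sum_{i\ge1}c_ia_i=n$; its length is $\sum c_i$. ${\rm ord}(n;S)$ is the maximal such length. Let $d_i=a_i-e$, let $B=\langle e,d_1,\dots,d_t\rangle$ be the blowup, and $\mathcal D=(e,d_1,\dots,d_t)$. A $B^{\mathcal D}$-factorization of an integer $b$ is $(x_0,\dots,x_t)\in\mathbb N^{t+1}$ with $x_0e+\sum_{i\ge1}x_id_i=b$; its length $|\mathbf x|$ is $\sum x_i$. *)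

theory Defs
  imports Main
begin

definition numerical_semigroup :: "nat set \<Rightarrow> bool" where
  "numerical_semigroup S \<longleftrightarrow> 0 \<in> S \<and> (\<forall>x\<in>S. \<forall>y\<in>S. x + y \<in> S) \<and> finite (UNIV - S)"

inductive_set monoid_gen :: "nat set \<Rightarrow> nat set" for A :: "nat set" where
  zero: "0 \<in> monoid_gen A"
| add: "g \<in> A \<Longrightarrow> x \<in> monoid_gen A \<Longrightarrow> g + x \<in> monoid_gen A"

definition minimal_generators :: "nat set \<Rightarrow> nat set \<Rightarrow> bool" where
  "minimal_generators S A \<longleftrightarrow> monoid_gen A = S \<and> (\<forall>g\<in>A. g \<notin> monoid_gen (A - {g}))"

text \<open>Generators e = a 0 < a 1 < ... < a t. Vectors (c_0,...,c_t) are functions on nat,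
  only indices 0..t matter.\<close>

definition fact_len :: "nat \<Rightarrow> (nat \<Rightarrow> nat) \<Rightarrow> nat" where
  "fact_len t c = (\<Sum>i\<le>t. c i)"

definition S_fact :: "(nat \<Rightarrow> nat) \<Rightarrow> nat \<Rightarrow> (nat \<Rightarrow> nat) \<Rightarrow> nat \<Rightarrow> bool" where
  "S_fact a t c n \<longleftrightarrow> (\<Sum>i\<le>t. c i * a i) = n"

definition blowup_gen :: "(nat \<Rightarrow> nat) \<Rightarrow> nat \<Rightarrow> int" where
  "blowup_gen a i = (if i = 0 then int (a 0) else int (a i) - int (a 0))"

definition BD_fact :: "(nat \<Rightarrow> nat) \<Rightarrow> nat \<Rightarrow> (nat \<Rightarrow> nat) \<Rightarrow> int \<Rightarrow> bool" where
  "BD_fact a t x b \<longleftrightarrow> (\<Sum>i\<le>t. int (x i) * blowup_gen a i) = b"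

definition ord_S :: "(nat \<Rightarrow> nat) \<Rightarrow> nat \<Rightarrow> nat \<Rightarrow> nat" where
  "ord_S a t n = Max {fact_len t c | c. S_fact a t c n}"

end

theory Submission
  imports Defs
begin

lemma split0: "(\<Sum>i\<le>(t::nat). f i) = f 0 + (\<Sum>i\<in>{..t}-{0}. f i)"
  by (rule sum.remove) auto

lemma upd_sum: "(\<Sum>i\<in>{..(t::nat)}-{0}. f ((x(0:=v)) i)) = (\<Sum>i\<in>{..t}-{0}. f (x i))"
  by (rule sum.cong) auto

theorem lemma2p2:
  fixes S :: "nat set" and t :: nat and a :: "nat \<Rightarrow> nat" and s r :: nat
  assumes "numerical_semigroup S"
    and "minimal_generators S (a ` {0..t})"
    and "strict_mono_on {0..t} a"
    and "s \<in> S"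
  shows "(\<forall>x. S_fact a t x s \<and> fact_len t x = r \<longrightarrow>
            BD_fact a t (x(0 := 0)) (int s - int r * int (a 0)) \<and> fact_len t (x(0 := 0)) \<le> r)
    \<and> (\<forall>y. BD_fact a t y (int s - int r * int (a 0)) \<and> fact_len t y \<le> r \<longrightarrow>
            S_fact a t (y(0 := 2 * y 0 + r - fact_len t y)) s
            \<and> fact_len t (y(0 := 2 * y 0 + r - fact_len t y)) = r + y 0
            \<and> ord_S a t s \<ge> r)"
proof -
  let ?T = "{..t}-{0}"
  have apos: "a i \<ge> 1" if "i \<le> t" for i
  proof (rule ccontr)
    assume "\<not> a i \<ge> 1"
    hence "a i = 0" by simp
    hence "0 \<in> a ` {0..t}" using that by force
    with assms(2) have "0 \<notin> monoid_gen (a ` {0..t} - {0})" unfolding minimal_generators_def by blast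
    thus False using monoid_gen.zero by blast
  qed
  have bgT: "blowup_gen a i = int (a i) - int (a 0)" if "i \<in> ?T" for i
    using that by (simp add: blowup_gen_def)
  have fin: "finite {fact_len t c | c. S_fact a t c s}"
  proof (rule finite_subset[of _ "{..s}"])
    show "{fact_len t c | c. S_fact a t c s} \<subseteq> {..s}"
    proof
      fix n assume "n \<in> {fact_len t c | c. S_fact a t c s}"
      then obtain c where c: "n = fact_len t c" "S_fact a t c s" by blast
      have "(\<Sum>i\<le>t. c i) \<le> (\<Sum>i\<le>t. c i * a i)"
        by (rule sum_mono) (use apos in auto)
      thus "n \<in> {..s}" using c by (simp add: fact_len_def S_fact_def)
    qed
  qed simp
  have P1: "BD_fact a t (x(0 := 0)) (int s - int r * int (a 0)) \<and> fact_len t (x(0 := 0)) \<le> r"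
    if h: "S_fact a t x s" "fact_len t x = r" for x
  proof
    have s: "int s = int (x 0) * int (a 0) + (\<Sum>i\<in>?T. int (x i) * int (a i))"
      proof -
      have "s = x 0 * a 0 + (\<Sum>i\<in>?T. x i * a i)"
        using h(1) unfolding S_fact_def by (simp add: split0[of "\<lambda>i. x i * a i"])
      thus ?thesis by (simp add: of_nat_sum)
    qed
    have r: "int r = int (x 0) + (\<Sum>i\<in>?T. int (x i))"
      proof -
      have "r = x 0 + (\<Sum>i\<in>?T. x i)"
        using h(2) unfolding fact_len_def by (simp add: split0[of x])
      thus ?thesis by (simp add: of_nat_sum)
    qed
    have "(\<Sum>i\<le>t. int ((x(0:=0)) i) * blowup_gen a i)
        = (\<Sum>i\<in>?T. int (x i) * (int (a i) - int (a 0)))"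
      by (subst split0) (auto intro!: sum.cong simp: bgT)
    also have "\<dots> = (\<Sum>i\<in>?T. int (x i) * int (a i)) - (\<Sum>i\<in>?T. int (x i)) * int (a 0)"
      by (simp add: right_diff_distrib sum_subtractf sum_distrib_right)
    also have "\<dots> = int s - int r * int (a 0)" using s r by (simp add: algebra_simps)
    finally show "BD_fact a t (x(0 := 0)) (int s - int r * int (a 0))" by (simp add: BD_fact_def)
    show "fact_len t (x(0 := 0)) \<le> r"
    proof -
      have "(\<Sum>i\<le>t. (x(0:=0)) i) \<le> (\<Sum>i\<le>t. x i)" by (rule sum_mono) simp
      thus ?thesis using h(2) unfolding fact_len_def by simp
    qed
  qed
  have P2: "S_fact a t (y(0 := 2 * y 0 + r - fact_len t y)) s
            \<and> fact_len t (y(0 := 2 * y 0 + r - fact_len t y)) = r + y 0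
            \<and> ord_S a t s \<ge> r"
    if h: "BD_fact a t y (int s - int r * int (a 0))" "fact_len t y \<le> r" for y
  proof -
    define c where "c = y(0 := 2 * y 0 + r - fact_len t y)"
    have L: "int (fact_len t y) = int (y 0) + (\<Sum>i\<in>?T. int (y i))"
      unfolding fact_len_def by (simp add: split0[of y] of_nat_sum)
    have c0: "int (c 0) = 2 * int (y 0) + int r - int (fact_len t y)"
      using h(2) by (simp add: c_def)
    have B: "int (y 0) * int (a 0) + (\<Sum>i\<in>?T. int (y i) * (int (a i) - int (a 0)))
          = int s - int r * int (a 0)"
    proof -
      have "(\<Sum>i\<le>t. int (y i) * blowup_gen a i) = int (y 0) * int (a 0) + (\<Sum>i\<in>?T. int (y i) * (int (a i) - int (a 0)))"
        by (subst split0) (auto intro!: sum.cong simp: bgT blowup_gen_def)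
      thus ?thesis using h(1) unfolding BD_fact_def by simp
    qed
    hence B': "int (y 0) * int (a 0) + (\<Sum>i\<in>?T. int (y i) * int (a i))
          - (\<Sum>i\<in>?T. int (y i)) * int (a 0) = int s - int r * int (a 0)"
      by (simp add: right_diff_distrib sum_subtractf sum_distrib_right)
    have "int (\<Sum>i\<le>t. c i * a i) = int (c 0) * int (a 0) + (\<Sum>i\<in>?T. int (y i) * int (a i))"
      unfolding of_nat_sum by (subst split0) (auto intro!: sum.cong simp: c_def)
    also have "\<dots> = int s"
    proof -
      have "int (c 0) = int (y 0) + int r - (\<Sum>i\<in>?T. int (y i))" using c0 L by simp
      hence "int (c 0) * int (a 0) = int (y 0) * int (a 0) + int r * int (a 0) - (\<Sum>i\<in>?T. int (y i)) * int (a 0)"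
        by (simp only: left_diff_distrib distrib_right)
      thus ?thesis using B' by linarith
    qed
    finally have "int (\<Sum>i\<le>t. c i * a i) = int s" .
    hence SF: "S_fact a t c s" unfolding S_fact_def using of_nat_eq_iff by blast
    have "int (fact_len t c) = int (c 0) + (\<Sum>i\<in>?T. int (y i))"
      unfolding fact_len_def of_nat_sum by (subst split0) (auto intro!: sum.cong simp: c_def)
    also have "\<dots> = int r + int (y 0)" using c0 L by simp
    finally have "int (fact_len t c) = int (r + y 0)" by simp
    hence FL: "fact_len t c = r + y 0" using of_nat_eq_iff by blast
    have "r + y 0 \<le> ord_S a t s" unfolding ord_S_def
      using SF FL fin by (intro Max_ge) (auto intro!: exI[of _ c])
    thus ?thesis using SF FL c_def by simp
  qed
  show ?thesis using P1 P2 by blast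
qed

end
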